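(* For every positive integer $r$ and nonnegative integer $n$, as formal power series in $t$, \[ \frac{A^r_n(t,q)}{\prod_{i=0}^n(1-tq^{ri})}=\sum_{k=0}^n\frac{q^{r\binom{k+1}{2}+(1-r)k}\,[r]_q^k\,[k]_{q^r}!\,S_r[n,k]\,t^k}{\prod_{i=0}^k(1-tq^{ri})}. \]
   Context: $[k]_q=1+\dots+q^{k-1}$, $[0]_q=0$, $[k]_q!=\prod_{i=1}^k[i]_q$; the subscript $q^r$ means $q$ replaced by $q^r$. The $r$-colored $q$-Stirling numbers of the second kind are defined by $S_r[0,k]=\delta_{0k}$ and $S_r[n,k]=S_r[n-1,k-1]+[rk+1]_qS_r[n-1,k]$ for $n\ge1$. The colored permutation group $\mathbb{Z}_r\wr\mathfrak{S}_n$ consists of words $\pi=\pi_1^{z_1}\cdots\pi_n^{z_n}$ with $\pi_1\cdots\pi_n\in\mathfrak{S}_n$ and colors $z_i\in\{0,\dots,r-1\}$, where $k^0$ is written $k$; these letters are totally ordered by $n^{r-1}<\dots<n^1<\dots<1^{r-1}<\dots<1^1<0<1<\dots<n$. With $\pi_0^{z_0}=0$, $\mathrm{Des}_r(\pi)=\{i\in\{0,\dots,n-1\}:\pi_i^{z_i}>\pi_{i+1}^{z_{i+1}}\}$, $\mathrm{des}_r(\pi)=|\mathrm{Des}_r(\pi)|$, $\mathrm{fmaj}_r(\pi)=r\sum_{i\in\mathrm{Des}_r(\pi)}i+\sum_{i=1}^nz_i$, and $A^r_n(t,q)=\sum_{\pi\in\mathbb{Z}_r\wr\mathfrak{S}_n}t^{\mathrm{des}_r(\pi)}q^{\mathrm{fmaj}_r(\pi)}$.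 *)

theory Defs
  imports "HOL-Computational_Algebra.Formal_Power_Series"
begin

definition qint :: "'a::comm_ring_1 \<Rightarrow> nat \<Rightarrow> 'a" where
  "qint q k = (\<Sum>i<k. q ^ i)"

definition qfact :: "'a::comm_ring_1 \<Rightarrow> nat \<Rightarrow> 'a" where
  "qfact q k = (\<Prod>i=1..k. qint q i)"

text \<open>r-colored q-Stirling numbers of the second kind S_r[n,k]
  (S_r[n-1,-1] is read as 0).\<close>
fun qStirling :: "nat \<Rightarrow> 'a::comm_ring_1 \<Rightarrow> nat \<Rightarrow> nat \<Rightarrow> 'a" where
  "qStirling r q 0 k = (if k = 0 then 1 else 0)"
| "qStirling r q (Suc n) 0 = qint q (r * 0 + 1) * qStirling r q n 0"
| "qStirling r q (Suc n) (Suc k) =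
     qStirling r q n k + qint q (r * Suc k + 1) * qStirling r q n (Suc k)"

text \<open>A colored permutation in Z_r wr S_n is a word pi_1^{z_1} ... pi_n^{z_n},
  represented as the list of pairs (pi_i, z_i).\<close>
definition colored_perms :: "nat \<Rightarrow> nat \<Rightarrow> (nat \<times> nat) list set" where
  "colored_perms r n = {w. length w = n \<and> distinct (map fst w) \<and>
      set (map fst w) = {1..n} \<and> (\<forall>x\<in>set w. snd x < r)}"

text \<open>The total order on letters
  n^{r-1} < ... < n^1 < ... < 1^{r-1} < ... < 1^1 < 0 < 1 < ... < n,
  realised by an order-embedding into the integers; the letter 0 is (0,0).\<close>
definition letter_key :: "nat \<Rightarrow> nat \<times> nat \<Rightarrow> int" where
  "letter_key r x = (if snd x = 0 then int (fst x) else - (int r * int (fst x) + int (snd x)))"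

definition letter_less :: "nat \<Rightarrow> nat \<times> nat \<Rightarrow> nat \<times> nat \<Rightarrow> bool" where
  "letter_less r x y \<longleftrightarrow> letter_key r x < letter_key r y"

text \<open>Des_r(pi) with pi_0^{z_0} = 0: position i (0 \<le> i \<le> n-1) is a descent iff
  letter i > letter i+1, where the word is 0 # w.\<close>
definition col_Des :: "nat \<Rightarrow> (nat \<times> nat) list \<Rightarrow> nat set" where
  "col_Des r w = {i. i < length w \<and> letter_less r (((0,0) # w) ! (i+1)) (((0,0) # w) ! i)}"

definition col_des :: "nat \<Rightarrow> (nat \<times> nat) list \<Rightarrow> nat" where
  "col_des r w = card (col_Des r w)"

definition col_fmaj :: "nat \<Rightarrow> (nat \<times> nat) list \<Rightarrow> nat" where
  "col_fmaj r w = r * (\<Sum>i\<in>col_Des r w. i) + (\<Sum>x\<leftarrow>w. snd x)"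

definition colored_eulerian :: "nat \<Rightarrow> nat \<Rightarrow> 'a::field \<Rightarrow> 'a fps" where
  "colored_eulerian r n q =
     (\<Sum>w\<in>colored_perms r n. fps_X ^ col_des r w * fps_const (q ^ col_fmaj r w))"

end

theory Submission
  imports Defs
begin

lemma qint_0[simp]: "qint q 0 = 0" by (simp add: qint_def)
lemma qint_Suc: "qint q (Suc k) = qint q k + q ^ k" by (simp add: qint_def)
lemma qint_1[simp]: "qint q (Suc 0) = 1" by (simp add: qint_def)

lemma qint_add: "qint q (a + b) = qint q a + q ^ a * qint q b"
  by (induction b) (simp_all add: qint_Suc algebra_simps power_add)

lemma qint_mult: "qint q (r * m) = qint q r * qint (q ^ r) m"
proof (induction m)
  case 0 then show ?case by simp
next
  case (Suc m)
  have "qint q (r * Suc m) = qint q (r * m + r)" by (simp add: algebra_simps)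
  also have "\<dots> = qint q (r*m) + q^(r*m) * qint q r" by (rule qint_add)
  also have "q^(r*m) = (q^r)^m" by (simp add: power_mult)
  finally show ?case using Suc by (simp add: qint_Suc algebra_simps)
qed

lemma qint_one_minus: "(1 - q) * qint q n = 1 - q ^ n"
  by (simp add: qint_def one_diff_power_eq)


definition ff :: "'a::comm_ring_1 \<Rightarrow> nat \<Rightarrow> nat \<Rightarrow> 'a" where
  "ff Q k m = (\<Prod>i<k. qint Q (m - i))"

definition ecoef :: "'a::comm_ring_1 \<Rightarrow> nat \<Rightarrow> nat \<Rightarrow> 'a" where
  "ecoef q r k = q ^ (r * (k choose 2) + k) * qint q r ^ k"

lemma ff_zero: "m < k \<Longrightarrow> ff Q k m = 0"
  unfolding ff_def by (rule prod_zero) (auto intro!: bexI[of _ m])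

lemma ff_Suc: "ff Q (Suc k) m = ff Q k m * qint Q (m - k)"
  by (simp add: ff_def)

lemma ff_Suc_Suc: "ff Q (Suc k) (Suc m) = qint Q (Suc m) * ff Q k m"
  unfolding ff_def by (subst prod.lessThan_Suc_shift) simp

lemma ecoef_Suc: "ecoef q r (Suc k) = ecoef q r k * (q ^ (r * k + 1) * qint q r)"
proof -
  have "r * (Suc k choose 2) + Suc k = (r * (k choose 2) + k) + (r * k + 1)"
    by (simp add: numeral_2_eq_2 algebra_simps)
  then show ?thesis unfolding ecoef_def by (simp add: power_add algebra_simps)
qed

lemma qStirling_big: "n < k \<Longrightarrow> qStirling r q n k = 0"
proof (induction n arbitrary: k)
  case 0 then show ?case by simp
next
  case (Suc n) then show ?case by (cases k) auto
qed

lemma qStirling_Suc: "qStirling r q (Suc n) k =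
   (if k = 0 then 0 else qStirling r q n (k - 1)) + qint q (r * k + 1) * qStirling r q n k"
  by (cases k) simp_all

lemma key_step: "qint q (r*m+1) * (ecoef q r k * ff (q^r) k m) =
   ecoef q r (Suc k) * ff (q^r) (Suc k) m + qint q (r*k+1) * (ecoef q r k * ff (q^r) k m)"
proof (cases "k \<le> m")
  case True
  have "r*m+1 = (r*k+1) + r*(m-k)" using True by (simp add: algebra_simps diff_mult_distrib2)
  then have "qint q (r*m+1) = qint q (r*k+1) + q^(r*k+1) * (qint q r * qint (q^r) (m-k))"
    by (simp only: qint_add qint_mult)
  then show ?thesis by (simp add: ecoef_Suc ff_Suc algebra_simps)
next
  case False then show ?thesis by (simp add: ff_zero)
qed

lemma stirling_expand:
  "qint q (r*m+1) ^ n = (\<Sum>k\<le>n. ecoef q r k * qStirling r q n k * ff (q^r) k m)"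
proof (induction n)
  case 0 then show ?case by (simp add: ecoef_def ff_def numeral_2_eq_2)
next
  case (Suc n)
  let ?S = "qStirling r q"
  have "(\<Sum>k\<le>Suc n. ecoef q r k * ?S (Suc n) k * ff (q^r) k m) =
     (\<Sum>k\<le>Suc n. ecoef q r k * (if k = 0 then 0 else ?S n (k - 1)) * ff (q^r) k m)
   + (\<Sum>k\<le>Suc n. qint q (r*k+1) * (ecoef q r k * ff (q^r) k m) * ?S n k)"
    by (simp add: qStirling_Suc algebra_simps sum.distrib)
  also have "(\<Sum>k\<le>Suc n. ecoef q r k * (if k = 0 then 0 else ?S n (k - 1)) * ff (q^r) k m)
     = (\<Sum>k\<le>n. ecoef q r (Suc k) * ?S n k * ff (q^r) (Suc k) m)"
    by (subst sum.atMost_Suc_shift) simp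
  also have "(\<Sum>k\<le>Suc n. qint q (r*k+1) * (ecoef q r k * ff (q^r) k m) * ?S n k)
     = (\<Sum>k\<le>n. qint q (r*k+1) * (ecoef q r k * ff (q^r) k m) * ?S n k)"
    by (simp add: qStirling_big)
  finally have "(\<Sum>k\<le>Suc n. ecoef q r k * ?S (Suc n) k * ff (q^r) k m) =
      (\<Sum>k\<le>n. (ecoef q r (Suc k) * ff (q^r) (Suc k) m + qint q (r*k+1) * (ecoef q r k * ff (q^r) k m)) * ?S n k)"
    by (simp add: sum.distrib algebra_simps)
  also have "\<dots> = (\<Sum>k\<le>n. qint q (r*m+1) * (ecoef q r k * ff (q^r) k m) * ?S n k)"
    by (simp only: key_step)
  also have "\<dots> = qint q (r*m+1) * qint q (r*m+1) ^ n"
    unfolding Suc sum_distrib_left by (simp add: algebra_simps)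
  finally show ?case by simp
qed


definition HH :: "'a::field \<Rightarrow> nat \<Rightarrow> 'a fps" where
  "HH Q k = Abs_fps (\<lambda>m. ff Q k m)"

definition PP :: "'a::field \<Rightarrow> nat \<Rightarrow> 'a fps" where
  "PP Q k = (\<Prod>i=0..k. 1 - fps_const (Q ^ i) * fps_X)"

lemma PP_Suc: "PP Q (Suc k) = PP Q k * (1 - fps_const (Q ^ Suc k) * fps_X)"
  unfolding PP_def by (simp add: prod.atLeast0_atMost_Suc)

lemma PP_nth0: "fps_nth (PP Q k) 0 = 1"
  by (induction k) (simp_all add: PP_Suc, simp add: PP_def)

lemma HH_step: "HH Q (Suc k) * (1 - fps_const (Q ^ Suc k) * fps_X) =
   fps_const (qint Q (Suc k)) * (fps_X * HH Q k)"
proof (rule fps_ext)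
  fix m
  show "fps_nth (HH Q (Suc k) * (1 - fps_const (Q ^ Suc k) * fps_X)) m =
        fps_nth (fps_const (qint Q (Suc k)) * (fps_X * HH Q k)) m"
  proof (cases m)
    case 0 then show ?thesis by (simp add: HH_def ff_zero)
  next
    case (Suc m')
    have "fps_nth (HH Q (Suc k) * (1 - fps_const (Q ^ Suc k) * fps_X)) m =
       fps_nth (HH Q (Suc k) - fps_const (Q ^ Suc k) * (fps_X * HH Q (Suc k))) m"
      by (simp add: algebra_simps)
    also have "\<dots> = ff Q (Suc k) (Suc m') - Q ^ Suc k * ff Q (Suc k) m'"
      using Suc by (simp add: HH_def)
    also have "\<dots> = qint Q (Suc k) * ff Q k m'"
    proof (cases "k \<le> m'")
      case True
      have "Suc m' = Suc k + (m' - k)" using True by simp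
      then have "qint Q (Suc m') = qint Q (Suc k) + Q ^ Suc k * qint Q (m' - k)"
        by (metis qint_add)
      moreover have "ff Q (Suc k) (Suc m') = qint Q (Suc m') * ff Q k m'" by (rule ff_Suc_Suc)
      moreover have "ff Q (Suc k) m' = ff Q k m' * qint Q (m' - k)" by (rule ff_Suc)
      ultimately show ?thesis by (simp add: algebra_simps)
    next
      case False then show ?thesis by (simp add: ff_zero)
    qed
    finally show ?thesis using Suc by (simp add: HH_def)
  qed
qed

lemma HH_PP: "HH Q k * PP Q k = fps_const (qfact Q k) * fps_X ^ k"
proof (induction k)
  case 0
  have "HH Q 0 * (1 - fps_X) = 1"
    by (rule fps_ext) (simp add: HH_def ff_def algebra_simps)
  then show ?case by (simp add: PP_def qfact_def)
next
  case (Suc k)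
  have "HH Q (Suc k) * PP Q (Suc k) = (HH Q (Suc k) * (1 - fps_const (Q ^ Suc k) * fps_X)) * PP Q k"
    by (simp add: PP_Suc mult_ac)
  also have "\<dots> = fps_const (qint Q (Suc k)) * fps_X * (HH Q k * PP Q k)"
    unfolding HH_step by (simp add: mult_ac)
  also have "\<dots> = fps_const (qfact Q (Suc k)) * fps_X ^ Suc k"
    by (simp add: Suc qfact_def algebra_simps)
  finally show ?case .
qed

definition GG :: "'a::field \<Rightarrow> nat \<Rightarrow> nat \<Rightarrow> 'a fps" where
  "GG q r n = Abs_fps (\<lambda>m. qint q (r*m+1) ^ n)"

lemma GG_expand: "GG q r n = (\<Sum>k\<le>n. fps_const (ecoef q r k * qStirling r q n k) * HH (q^r) k)"
  by (rule fps_ext) (simp only: GG_def fps_sum_nth HH_def fps_nth_Abs_fps stirling_expand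
      fps_mult_left_const_nth mult.assoc)

lemma RHS_eq:
  fixes q :: "'a::field"
  shows "(\<Sum>k=0..n. fps_const (q powi (int r * int (Suc k choose 2) + (1 - int r) * int k)
                   * qint q r ^ k * qfact (q ^ r) k * qStirling r q n k) * fps_X ^ k
              / (\<Prod>i=0..k. 1 - fps_const (q ^ (r * i)) * fps_X)) = GG q r n"
proof -
  have "fps_const (q powi (int r * int (Suc k choose 2) + (1 - int r) * int k)
                   * qint q r ^ k * qfact (q ^ r) k * qStirling r q n k) * fps_X ^ k
              / (\<Prod>i=0..k. 1 - fps_const (q ^ (r * i)) * fps_X)
        = fps_const (ecoef q r k * qStirling r q n k) * HH (q^r) k" for k
  proof -
    have e: "int r * int (Suc k choose 2) + (1 - int r) * int k = int (r * (k choose 2) + k)"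
      by (simp add: numeral_2_eq_2 algebra_simps)
    have p: "(\<Prod>i=0..k. 1 - fps_const (q ^ (r * i)) * fps_X) = PP (q^r) k"
      by (simp add: PP_def power_mult)
    have c: "fps_const (q powi (int r * int (Suc k choose 2) + (1 - int r) * int k)
                   * qint q r ^ k * qfact (q ^ r) k * qStirling r q n k)
         = fps_const (ecoef q r k * qStirling r q n k) * fps_const (qfact (q^r) k)"
      unfolding e power_int_of_nat by (simp add: ecoef_def mult_ac)
    have "fps_const (q powi (int r * int (Suc k choose 2) + (1 - int r) * int k)
                   * qint q r ^ k * qfact (q ^ r) k * qStirling r q n k) * fps_X ^ k
         = fps_const (ecoef q r k * qStirling r q n k) * (HH (q^r) k * PP (q^r) k)"
      unfolding c HH_PP by (simp only: mult.assoc)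
    then show ?thesis unfolding p
      by (simp add: fps_divide_unit PP_nth0 inverse_mult_eq_1' mult.assoc)
  qed
  then show ?thesis by (simp add: GG_expand atLeast0AtMost)
qed


definition qD :: "'a::field \<Rightarrow> 'a fps \<Rightarrow> 'a fps" where
  "qD Q F = Abs_fps (\<lambda>m. qint Q m * fps_nth F m)"

definition qS :: "'a::field \<Rightarrow> 'a fps \<Rightarrow> 'a fps" where
  "qS Q F = Abs_fps (\<lambda>m. Q ^ m * fps_nth F m)"

definition PP' :: "'a::field \<Rightarrow> nat \<Rightarrow> 'a fps" where
  "PP' Q k = (\<Prod>i=1..k. 1 - fps_const (Q ^ i) * fps_X)"

lemma qD_mult: "qD Q (F * G) = qD Q F * G + qS Q F * qD Q G"
proof (rule fps_ext)
  fix m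
  have "fps_nth (qD Q (F * G)) m = (\<Sum>i=0..m. qint Q m * (fps_nth F i * fps_nth G (m - i)))"
    by (simp add: qD_def fps_mult_nth sum_distrib_left)
  also have "\<dots> = (\<Sum>i=0..m. (qint Q i * fps_nth F i) * fps_nth G (m - i)
       + (Q ^ i * fps_nth F i) * (qint Q (m - i) * fps_nth G (m - i)))"
  proof (rule sum.cong)
    fix i assume "i \<in> {0..m}"
    then have "m = i + (m - i)" by simp
    then have "qint Q m = qint Q i + Q ^ i * qint Q (m - i)" by (metis qint_add)
    then show "qint Q m * (fps_nth F i * fps_nth G (m - i)) = (qint Q i * fps_nth F i) * fps_nth G (m - i)
       + (Q ^ i * fps_nth F i) * (qint Q (m - i) * fps_nth G (m - i))"
      by (simp add: algebra_simps)
  qed simp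
  also have "\<dots> = fps_nth (qD Q F * G + qS Q F * qD Q G) m"
    by (simp add: qD_def qS_def fps_mult_nth sum.distrib)
  finally show "fps_nth (qD Q (F * G)) m = fps_nth (qD Q F * G + qS Q F * qD Q G) m" .
qed

lemma qS_mult: "qS Q (F * G) = qS Q F * qS Q G"
proof (rule fps_ext)
  fix m
  have "fps_nth (qS Q (F * G)) m = (\<Sum>i=0..m. Q ^ m * (fps_nth F i * fps_nth G (m - i)))"
    by (simp add: qS_def fps_mult_nth sum_distrib_left)
  also have "\<dots> = (\<Sum>i=0..m. (Q ^ i * fps_nth F i) * (Q ^ (m - i) * fps_nth G (m - i)))"
  proof (rule sum.cong)
    fix i assume "i \<in> {0..m}"
    then have "Q ^ m = Q ^ i * Q ^ (m - i)" by (simp flip: power_add)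
    then show "Q ^ m * (fps_nth F i * fps_nth G (m - i)) = (Q ^ i * fps_nth F i) * (Q ^ (m - i) * fps_nth G (m - i))"
      by (simp add: algebra_simps)
  qed simp
  also have "\<dots> = fps_nth (qS Q F * qS Q G) m"
    by (simp add: qS_def fps_mult_nth)
  finally show "fps_nth (qS Q (F * G)) m = fps_nth (qS Q F * qS Q G) m" .
qed

lemma qD_lin: "qD Q (1 - fps_const a * fps_X) = - (fps_const a * fps_X)"
  by (rule fps_ext) (auto simp: qD_def le_Suc_eq)

lemma qS_lin: "qS Q (1 - fps_const a * fps_X) = 1 - fps_const (a * Q) * fps_X"
  by (rule fps_ext) (auto simp: qS_def le_Suc_eq)

lemma PP_split: "PP Q n = (1 - fps_X) * PP' Q n"
  unfolding PP_def PP'_def by (subst prod.atLeast_Suc_atMost) simp_all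

lemma PP'_Suc: "PP' Q (Suc n) = PP' Q n * (1 - fps_const (Q ^ Suc n) * fps_X)"
  unfolding PP'_def by (simp add: prod.nat_ivl_Suc')

lemma qS_PP: "qS Q (PP Q n) = PP' Q n * (1 - fps_const (Q ^ Suc n) * fps_X)"
proof (induction n)
  case 0 then show ?case by (simp add: PP_def PP'_def qS_lin[where a=1, simplified])
next
  case (Suc n)
  have "Q ^ Suc n * Q = Q ^ Suc (Suc n)" by simp
  then show ?case
    unfolding PP_Suc qS_mult qS_lin Suc PP'_Suc by (simp only: mult_ac)
qed

lemma qD_PP: "qD Q (PP Q n) = - (fps_const (qint Q (Suc n)) * fps_X * PP' Q n)"
proof (induction n)
  case 0 then show ?case by (simp add: PP_def PP'_def qD_lin[where a=1, simplified])
next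
  case (Suc n)
  have "qD Q (PP Q (Suc n)) = qD Q (PP Q n) * (1 - fps_const (Q ^ Suc n) * fps_X)
       + qS Q (PP Q n) * qD Q (1 - fps_const (Q ^ Suc n) * fps_X)"
    by (simp add: PP_Suc qD_mult)
  also have "\<dots> = - ((fps_const (qint Q (Suc n)) + fps_const (Q ^ Suc n)) * fps_X * PP' Q (Suc n))"
    unfolding Suc qS_PP qD_lin PP'_Suc by algebra
  also have "fps_const (qint Q (Suc n)) + fps_const (Q ^ Suc n) = fps_const (qint Q (Suc (Suc n)))"
    by (simp add: qint_Suc[of Q "Suc n"])
  finally show ?case .
qed

lemma GG_Suc: "GG q r (Suc n) = GG q r n + fps_const (q * qint q r) * qD (q^r) (GG q r n)"
proof (rule fps_ext)
  fix m
  have "qint q (r*m+1) = 1 + q * (qint q r * qint (q^r) m)"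
    using qint_add[of q 1 "r*m"] qint_mult[of q r m] by (simp add: add.commute)
  then show "fps_nth (GG q r (Suc n)) m = fps_nth (GG q r n + fps_const (q * qint q r) * qD (q^r) (GG q r n)) m"
    by (simp add: GG_def qD_def algebra_simps)
qed

lemma main_induct:
  fixes A :: "nat \<Rightarrow> 'a::field fps"
  assumes A0: "A 0 = 1"
    and rec: "\<And>n. A (Suc n) = fps_X * fps_const (qint q r * qint (q^r) (Suc n)) * A n
        + (1 - fps_X) * (A n + fps_const (q * qint q r) * qD (q^r) (A n))"
  shows "A n = PP (q^r) n * GG q r n"
proof (induction n)
  case 0
  have "(1 - fps_X) * GG q r 0 = 1"
    by (rule fps_ext) (simp add: GG_def algebra_simps)
  then show ?case by (simp add: A0 PP_def)
next
  case (Suc n)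
  define Q where "Q = q^r"
  define G where "G = GG q r n"
  define P' where "P' = PP' Q n"
  define Cr where "Cr = fps_const (qint q r)"
  define Cn where "Cn = fps_const (qint Q (Suc n))"
  define Cq where "Cq = fps_const q"
  define Ca where "Ca = fps_const (Q ^ Suc n)"
  define DG where "DG = qD Q G"
  have P: "PP Q n = (1 - fps_X) * P'" by (simp add: P'_def PP_split)
  have DP: "qD Q (PP Q n) = - (Cn * fps_X * P')" by (simp add: qD_PP Cn_def P'_def)
  have SP: "qS Q (PP Q n) = P' * (1 - Ca * fps_X)" by (simp add: qS_PP Ca_def P'_def)
  have sc: "Cr * Cn - Cq * Cr * Cn = 1 - Ca"
  proof -
    have "(1 - q) * qint q r = 1 - Q" using qint_one_minus[of q r] by (simp add: Q_def)
    moreover have "(1 - Q) * qint Q (Suc n) = 1 - Q ^ Suc n" by (rule qint_one_minus)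
    ultimately have "qint q r * qint Q (Suc n) - q * qint q r * qint Q (Suc n) = 1 - Q ^ Suc n"
      by (metis (no_types, lifting) left_diff_distrib mult.assoc mult.left_neutral)
    then have "fps_const (qint q r * qint Q (Suc n) - q * qint q r * qint Q (Suc n)) = fps_const (1 - Q ^ Suc n)"
      by simp
    moreover have "fps_const (1 - Q ^ Suc n) = 1 - Ca" unfolding Ca_def
      by (metis fps_const_sub fps_const_1_eq_1)
    ultimately show ?thesis by (simp add: Cr_def Cn_def Cq_def)
  qed
  have "A (Suc n) = fps_X * (Cr * Cn) * (PP Q n * G)
        + (1 - fps_X) * (PP Q n * G + (Cq * Cr) * (qD Q (PP Q n) * G + qS Q (PP Q n) * DG))"
    by (simp add: rec Suc Q_def G_def qD_mult Cr_def Cn_def Cq_def DG_def)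
  also have "\<dots> = fps_X * (Cr * Cn) * ((1 - fps_X) * P' * G)
        + (1 - fps_X) * ((1 - fps_X) * P' * G + (Cq * Cr) * (- (Cn * fps_X * P') * G + P' * (1 - Ca * fps_X) * DG))"
    unfolding DP SP unfolding P by simp
  also have "\<dots> = (1 - fps_X) * P' * (1 - Ca * fps_X) * (G + Cq * Cr * DG)"
    using sc by algebra
  also have "\<dots> = PP Q (Suc n) * GG q r (Suc n)"
    unfolding PP_Suc P GG_Suc G_def[symmetric] Q_def[symmetric] DG_def[symmetric] Cq_def Cr_def Ca_def
    by (simp add: mult_ac)
  finally show ?case by (simp add: Q_def)
qed


definition ins :: "nat \<Rightarrow> (nat \<times> nat) list \<Rightarrow> nat \<Rightarrow> nat \<Rightarrow> (nat \<times> nat) list" where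
  "ins n w z j = take j w @ (Suc n, z) # drop j w"

lemma CP_D: "w \<in> colored_perms r n \<Longrightarrow> length w = n \<and> distinct (map fst w) \<and>
      fst ` set w = {1..n} \<and> (\<forall>x\<in>set w. snd x < r)"
  by (simp add: colored_perms_def)

lemma ins_mem:
  assumes w: "w \<in> colored_perms r n" and z: "z < r" and j: "j \<le> n"
  shows "ins n w z j \<in> colored_perms r (Suc n)"
proof -
  from CP_D[OF w] have l: "length w = n" and d: "distinct (map fst w)"
    and s: "fst ` set w = {1..n}" and c: "\<forall>x\<in>set w. snd x < r" by auto
  have sw: "set w = set (take j w) \<union> set (drop j w)"
    by (metis append_take_drop_id set_append)
  have nin: "Suc n \<notin> fst ` set w" using s by auto
  have d2: "distinct (map fst (take j w) @ map fst (drop j w))"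
    using d by (metis append_take_drop_id map_append)
  show ?thesis unfolding colored_perms_def ins_def
  proof (intro CollectI conjI)
    show "length (take j w @ (Suc n, z) # drop j w) = Suc n" using l j by simp
    show "distinct (map fst (take j w @ (Suc n, z) # drop j w))"
      using d2 nin sw by auto
    have "set (take j w @ (Suc n, z) # drop j w) = insert (Suc n, z) (set w)" using sw by auto
    then have "set (map fst (take j w @ (Suc n, z) # drop j w)) = insert (Suc n) (fst ` set w)"
      by (metis image_insert set_map fst_conv)
    then show "set (map fst (take j w @ (Suc n, z) # drop j w)) = {1..Suc n}"
      using s by (simp add: atLeastAtMostSuc_conv)
    show "\<forall>x\<in>set (take j w @ (Suc n, z) # drop j w). snd x < r"
      using c sw z by auto
  qed
qed

lemma ins_inj:
  assumes w: "w \<in> colored_perms r n" and j: "j \<le> n"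
    and w': "w' \<in> colored_perms r n" and j': "j' \<le> n"
    and eq: "ins n w z j = ins n w' z' j'"
  shows "w = w' \<and> z = z' \<and> j = j'"
proof -
  have nin: "\<And>x. x \<in> set w \<Longrightarrow> fst x \<noteq> Suc n" using CP_D[OF w] by force
  have nin': "\<And>x. x \<in> set w' \<Longrightarrow> fst x \<noteq> Suc n" using CP_D[OF w'] by force
  have f1: "filter (\<lambda>x. fst x \<noteq> Suc n) (ins n w z j) = w"
  proof -
    have "filter (\<lambda>x. fst x \<noteq> Suc n) (take j w) = take j w" using nin
      by (auto simp: filter_id_conv dest: in_set_takeD)
    moreover have "filter (\<lambda>x. fst x \<noteq> Suc n) (drop j w) = drop j w" using nin
      by (auto simp: filter_id_conv dest: in_set_dropD)
    ultimately show ?thesis unfolding ins_def by simp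
  qed
  have f2: "filter (\<lambda>x. fst x \<noteq> Suc n) (ins n w' z' j') = w'"
  proof -
    have "filter (\<lambda>x. fst x \<noteq> Suc n) (take j' w') = take j' w'" using nin'
      by (auto simp: filter_id_conv dest: in_set_takeD)
    moreover have "filter (\<lambda>x. fst x \<noteq> Suc n) (drop j' w') = drop j' w'" using nin'
      by (auto simp: filter_id_conv dest: in_set_dropD)
    ultimately show ?thesis unfolding ins_def by simp
  qed
  have ww: "w = w'" using f1 f2 eq by simp
  have t1: "length (takeWhile (\<lambda>x. fst x \<noteq> Suc n) (ins n w z j)) = j"
  proof -
    have "\<And>x. x \<in> set (take j w) \<Longrightarrow> fst x \<noteq> Suc n" using nin by (auto dest: in_set_takeD)
    then have "takeWhile (\<lambda>x. fst x \<noteq> Suc n) (ins n w z j) = take j w"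
      unfolding ins_def by simp
    then show ?thesis using CP_D[OF w] j by simp
  qed
  have t2: "length (takeWhile (\<lambda>x. fst x \<noteq> Suc n) (ins n w' z' j')) = j'"
  proof -
    have "\<And>x. x \<in> set (take j' w') \<Longrightarrow> fst x \<noteq> Suc n" using nin' by (auto dest: in_set_takeD)
    then have "takeWhile (\<lambda>x. fst x \<noteq> Suc n) (ins n w' z' j') = take j' w'"
      unfolding ins_def by simp
    then show ?thesis using CP_D[OF w'] j' by simp
  qed
  have jj: "j = j'" using t1 t2 eq by simp
  have "ins n w z j ! j = (Suc n, z)" unfolding ins_def using CP_D[OF w] j by (simp add: nth_append)
  moreover have "ins n w' z' j' ! j' = (Suc n, z')" unfolding ins_def using CP_D[OF w'] j' by (simp add: nth_append)
  ultimately have "z = z'" using eq jj by simp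
  with ww jj show ?thesis by simp
qed

lemma ins_surj:
  assumes v: "v \<in> colored_perms r (Suc n)"
  shows "\<exists>w z j. w \<in> colored_perms r n \<and> z < r \<and> j \<le> n \<and> v = ins n w z j"
proof -
  from CP_D[OF v] have l: "length v = Suc n" and d: "distinct (map fst v)"
    and s: "fst ` set v = {1..Suc n}" and c: "\<forall>x\<in>set v. snd x < r" by auto
  obtain x where x: "x \<in> set v" "fst x = Suc n" using s by (metis atLeastAtMost_iff image_iff le_refl le_add1 plus_1_eq_Suc)
  obtain ys zs where v_eq: "v = ys @ x # zs" using split_list[OF x(1)] by blast
  have dd: "distinct (map fst ys @ fst x # map fst zs)" using d v_eq by simp
  have nys: "Suc n \<notin> fst ` set ys" and nzs: "Suc n \<notin> fst ` set zs"
    using dd x(2) by auto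
  let ?w = "ys @ zs"
  have "?w \<in> colored_perms r n"
    unfolding colored_perms_def
  proof (intro CollectI conjI)
    show "length ?w = n" using l v_eq by simp
    show "distinct (map fst ?w)" using dd by auto
    have "fst ` set v = fst ` set ?w \<union> {Suc n}" using v_eq x(2) by auto
    moreover have "Suc n \<notin> fst ` set ?w" using nys nzs by (simp add: image_Un)
    ultimately have "fst ` set ?w = fst ` set v - {Suc n}" by blast
    also have "\<dots> = {1..n}" using s by auto
    finally show "set (map fst ?w) = {1..n}" by (simp add: image_Un)
    show "\<forall>x\<in>set ?w. snd x < r" using c v_eq by auto
  qed
  moreover have "snd x < r" using c x by auto
  moreover have "length ys \<le> n" using l v_eq by simp
  moreover have "v = ins n ?w (snd x) (length ys)"
    unfolding ins_def using v_eq x(2) by (cases x) simp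
  ultimately show ?thesis by blast
qed


definition sh :: "nat \<Rightarrow> nat \<Rightarrow> nat" where "sh j i = (if i < j then i else Suc i)"
definition sh' :: "nat \<Rightarrow> nat \<Rightarrow> nat" where "sh' j i = (if i \<le> j then i else Suc i)"
definition E0 :: "nat set \<Rightarrow> nat \<Rightarrow> nat \<Rightarrow> nat set" where
  "E0 D n j = sh j ` D \<union> (if j < n then {Suc j} else {})"
definition E1 :: "nat set \<Rightarrow> nat \<Rightarrow> nat set" where
  "E1 D j = sh' j ` D \<union> {j}"

lemma sh_image_iff: "i \<in> sh j ` D \<longleftrightarrow> (i < j \<and> i \<in> D) \<or> (j < i \<and> i - 1 \<in> D)"
proof
  assume "i \<in> sh j ` D" then show "(i < j \<and> i \<in> D) \<or> (j < i \<and> i - 1 \<in> D)"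
    by (auto simp: sh_def split: if_splits)
next
  assume h: "(i < j \<and> i \<in> D) \<or> (j < i \<and> i - 1 \<in> D)"
  show "i \<in> sh j ` D"
  proof (cases "i < j")
    case True then show ?thesis using h by (force simp: sh_def)
  next
    case False then have "j < i" "i - 1 \<in> D" using h by auto
    then show ?thesis by (intro image_eqI[of _ _ "i - 1"]) (auto simp: sh_def)
  qed
qed

lemma sh'_image_iff: "i \<in> sh' j ` D \<longleftrightarrow> (i \<le> j \<and> i \<in> D) \<or> (Suc j < i \<and> i - 1 \<in> D)"
proof
  assume "i \<in> sh' j ` D" then show "(i \<le> j \<and> i \<in> D) \<or> (Suc j < i \<and> i - 1 \<in> D)"
    by (auto simp: sh'_def split: if_splits)
next
  assume h: "(i \<le> j \<and> i \<in> D) \<or> (Suc j < i \<and> i - 1 \<in> D)"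
  show "i \<in> sh' j ` D"
  proof (cases "i \<le> j")
    case True then show ?thesis using h by (force simp: sh'_def)
  next
    case False then have "Suc j < i" "i - 1 \<in> D" using h by auto
    then show ?thesis by (intro image_eqI[of _ _ "i - 1"]) (auto simp: sh'_def)
  qed
qed

lemma nth_ins_le: "j \<le> length w \<Longrightarrow> i \<le> j \<Longrightarrow> ((0,0) # ins n w z j) ! i = ((0,0) # w) ! i"
  by (cases i) (auto simp: ins_def nth_append)

lemma nth_ins_eq: "j \<le> length w \<Longrightarrow> ((0,0) # ins n w z j) ! Suc j = (Suc n, z)"
  by (simp add: ins_def nth_append)

lemma nth_ins_gt: "j \<le> length w \<Longrightarrow> j < i \<Longrightarrow> i \<le> length w \<Longrightarrow>
    ((0,0) # ins n w z j) ! Suc i = ((0,0) # w) ! i"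
proof -
  assume a: "j \<le> length w" "j < i" "i \<le> length w"
  then obtain k where k: "i = Suc k" by (cases i) auto
  have "ins n w z j ! i = ((Suc n, z) # drop j w) ! (i - j)"
    using a by (simp add: ins_def nth_append)
  also have "\<dots> = drop j w ! (i - j - 1)" using a by (simp add: nth_Cons')
  also have "\<dots> = w ! k" using a k by simp
  finally show ?thesis using k by simp
qed

lemma key_bounds:
  assumes w: "w \<in> colored_perms r n" and x: "x \<in> set ((0,0) # w)"
  shows "letter_less r x (Suc n, 0)" and "0 < z \<Longrightarrow> letter_less r (Suc n, z) x"
proof -
  have b: "fst x \<le> n \<and> snd x < r \<or> x = (0,0)" using x CP_D[OF w] by force
  have h: "- (int r * int (fst x)) - int (snd x) < 1 + int n"
  proof -
    have "0 \<le> int r * int (fst x)" by simp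
    then show ?thesis by linarith
  qed
  then show "letter_less r x (Suc n, 0)"
    using b by (auto simp: letter_less_def letter_key_def)
  show "letter_less r (Suc n, z) x" if "0 < z"
  proof (cases "snd x = 0")
    case True
    have k1: "letter_key r (Suc n, z) = - (int r * int (Suc n) + int z)" using that by (simp add: letter_key_def)
    have k2: "letter_key r x = int (fst x)" using True by (simp add: letter_key_def)
    have "0 \<le> int r * int (Suc n)" by simp
    moreover have "0 < int z" using that by simp
    ultimately show ?thesis unfolding letter_less_def k1 k2 by linarith
  next
    case False
    then have "fst x \<le> n" "snd x < r" using b by auto
    then have "int r * int (fst x) + int (snd x) < int r * int (Suc n) + int z"
    proof -
      have "int r * int (fst x) \<le> int r * int n" using \<open>fst x \<le> n\<close> by (simp add: mult_left_mono)
      moreover have "int (snd x) < int r" "0 < int z" using \<open>snd x < r\<close> that by simp_all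
      ultimately have "int r * int (fst x) + int (snd x) < int r * int n + int r + int z" by linarith
      then show ?thesis by (simp add: algebra_simps)
    qed
    then show ?thesis using False that by (simp add: letter_less_def letter_key_def)
  qed
qed

lemma Des_char: "i \<in> col_Des r w \<longleftrightarrow> i < length w \<and> letter_less r (((0,0) # w) ! Suc i) (((0,0) # w) ! i)"
  by (simp add: col_Des_def)

lemma Des_sub: "col_Des r w \<subseteq> {..<length w}"
  by (auto simp: col_Des_def)

lemma Des_ins:
  assumes w: "w \<in> colored_perms r n" and z: "z < r" and j: "j \<le> n"
  shows "col_Des r (ins n w z j) = (if z = 0 then E0 (col_Des r w) n j else E1 (col_Des r w) j)"
proof -
  let ?W = "(0,0) # w" and ?V = "(0,0) # ins n w z j" and ?D = "col_Des r w"
  have lw: "length w = n" using CP_D[OF w] by simp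
  have lv: "length (ins n w z j) = Suc n" using j lw by (simp add: ins_def)
  have inW: "k \<le> n \<Longrightarrow> ?W ! k \<in> set ?W" for k using lw by (intro nth_mem) simp
  have char: "i \<in> col_Des r (ins n w z j) \<longleftrightarrow>
     (i < j \<and> i \<in> ?D) \<or> (i = j \<and> 0 < z) \<or> (i = Suc j \<and> j < n \<and> z = 0) \<or> (Suc j < i \<and> i - 1 \<in> ?D)" for i
  proof -
    consider "i < j" | "i = j" | "i = Suc j" | "Suc j < i" by linarith
    then show ?thesis
    proof cases
      case 1
      have "?V ! Suc i = ?W ! Suc i" "?V ! i = ?W ! i" using 1 j lw by (intro nth_ins_le; simp)+
      then show ?thesis using 1 j lw
        by (simp add: Des_char[where i=i and w="ins n w z j"] Des_char[where i=i and w=w] lv del: nth_Cons_Suc)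
    next
      case 2
      have "letter_less r (Suc n, z) (?W ! j) \<longleftrightarrow> 0 < z"
        using key_bounds(2)[OF w inW[OF j], of z] key_bounds(1)[OF w inW[OF j]]
        by (cases z) (auto simp: letter_less_def)
      moreover have "ins n w z j ! j = (Suc n, z)" using nth_ins_eq[of j w n z] j lw by simp
      ultimately show ?thesis using 2 j lw
        by (simp add: Des_char[where i=j and w="ins n w z j"] lv nth_ins_le)
    next
      case 3
      show ?thesis
      proof (cases "j < n")
        case True
        have "letter_less r (?W ! Suc j) (Suc n, z) \<longleftrightarrow> z = 0"
          using key_bounds(2)[OF w inW[of "Suc j"], of z] key_bounds(1)[OF w inW[of "Suc j"]] True
          by (cases z) (auto simp: letter_less_def)
        moreover have "?V ! Suc (Suc j) = ?W ! Suc j" using True lw by (intro nth_ins_gt) auto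
        moreover have "?V ! Suc j = (Suc n, z)" using nth_ins_eq[of j w n z] j lw by simp
        ultimately show ?thesis using 3 True j lw
          by (simp add: Des_char[where i="Suc j" and w="ins n w z j"] lv del: nth_Cons_Suc)
      next
        case False then show ?thesis using 3 j lw Des_sub[of r "ins n w z j"] lv
          by auto
      qed
    next
      case 4
      then obtain k where k: "i = Suc k" "j < k" by (cases i) auto
      show ?thesis
      proof (cases "i \<le> n")
        case True
        have "?V ! Suc i = ?W ! i" using True k lw by (intro nth_ins_gt) auto
        moreover have "?V ! i = ?W ! k" using True k lw by (simp only: k, intro nth_ins_gt) auto
        ultimately show ?thesis using 4 True j lw k
          by (simp add: Des_char[where i="Suc k" and w="ins n w z j"] Des_char[where i=k and w=w] lv del: nth_Cons_Suc)
      next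
        case False then show ?thesis using 4 j lw Des_sub[of r w]
          by (auto simp: Des_char[where i=i and w="ins n w z j"] lv)
      qed
    qed
  qed
  have Dn: "?D \<subseteq> {..<n}" using Des_sub[of r w] lw by simp
  show ?thesis
  proof (cases "z = 0")
    case True
    show ?thesis
    proof (rule set_eqI)
      fix i show "i \<in> col_Des r (ins n w z j) \<longleftrightarrow> i \<in> (if z = 0 then E0 ?D n j else E1 ?D j)"
        using True char[of i] Dn by (auto simp: E0_def sh_image_iff)
    qed
  next
    case False
    show ?thesis
    proof (rule set_eqI)
      fix i show "i \<in> col_Des r (ins n w z j) \<longleftrightarrow> i \<in> (if z = 0 then E0 ?D n j else E1 ?D j)"
        using False char[of i] Dn by (auto simp: E1_def sh'_image_iff)
    qed
  qed
qed


lemma inj_sh: "inj_on (sh j) D" by (auto simp: inj_on_def sh_def split: if_splits)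
lemma inj_sh': "inj_on (sh' j) D" by (auto simp: inj_on_def sh'_def split: if_splits)

lemma count_sum: "finite D \<Longrightarrow> (\<Sum>i\<in>D. if P i then 1 else 0 :: nat) = card {i\<in>D. P i}"
  by (simp add: sum.If_cases Int_def conj_commute)

lemma sum_sh: "finite D \<Longrightarrow> \<Sum>(sh j ` D) = \<Sum>D + card {i\<in>D. j \<le> i}"
proof -
  assume f: "finite D"
  have "\<Sum>(sh j ` D) = (\<Sum>i\<in>D. sh j i)" by (simp add: sum.reindex inj_sh)
  also have "\<dots> = (\<Sum>i\<in>D. i + (if j \<le> i then 1 else 0))" by (rule sum.cong) (auto simp: sh_def)
  also have "\<dots> = \<Sum>D + card {i\<in>D. j \<le> i}" using f by (simp add: sum.distrib count_sum)
  finally show ?thesis .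
qed

lemma sum_sh': "finite D \<Longrightarrow> \<Sum>(sh' j ` D) = \<Sum>D + card {i\<in>D. j < i}"
proof -
  assume f: "finite D"
  have "\<Sum>(sh' j ` D) = (\<Sum>i\<in>D. sh' j i)" by (simp add: sum.reindex inj_sh')
  also have "\<dots> = (\<Sum>i\<in>D. i + (if j < i then 1 else 0))" by (rule sum.cong) (auto simp: sh'_def)
  also have "\<dots> = \<Sum>D + card {i\<in>D. j < i}" using f by (simp add: sum.distrib count_sum)
  finally show ?thesis .
qed

lemma E0_facts:
  assumes D: "D \<subseteq> {..<n}" and j: "j \<le> n"
  shows "card (E0 D n j) = card D + (if j \<in> D \<or> j = n then 0 else 1)"
    and "\<Sum>(E0 D n j) = \<Sum>D + card {i\<in>D. j \<le> i} + (if j \<in> D \<or> j = n then 0 else Suc j)"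
proof -
  have f: "finite D" using D finite_subset by blast
  have mem: "Suc j \<in> sh j ` D \<longleftrightarrow> j \<in> D" by (simp add: sh_image_iff)
  have cd: "card (sh j ` D) = card D" by (simp add: card_image inj_sh)
  show "card (E0 D n j) = card D + (if j \<in> D \<or> j = n then 0 else 1)"
    using j f mem cd by (auto simp: E0_def card_insert_if)
  show "\<Sum>(E0 D n j) = \<Sum>D + card {i\<in>D. j \<le> i} + (if j \<in> D \<or> j = n then 0 else Suc j)"
    using j f mem sum_sh[OF f, of j] by (auto simp: E0_def sum.insert_if)
qed

lemma E1_facts:
  assumes D: "D \<subseteq> {..<n}"
  shows "card (E1 D j) = card D + (if j \<in> D then 0 else 1)"
    and "\<Sum>(E1 D j) = \<Sum>D + card {i\<in>D. j < i} + (if j \<in> D then 0 else j)"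
proof -
  have f: "finite D" using D finite_subset by blast
  have mem: "j \<in> sh' j ` D \<longleftrightarrow> j \<in> D" by (simp add: sh'_image_iff)
  have cd: "card (sh' j ` D) = card D" by (simp add: card_image inj_sh')
  show "card (E1 D j) = card D + (if j \<in> D then 0 else 1)"
    using f mem cd by (auto simp: E1_def card_insert_if)
  show "\<Sum>(E1 D j) = \<Sum>D + card {i\<in>D. j < i} + (if j \<in> D then 0 else j)"
    using f mem sum_sh'[OF f, of j] by (auto simp: E1_def sum.insert_if)
qed

lemma card_gt_empty: "(\<And>i. i \<in> D \<Longrightarrow> i \<le> (n::nat)) \<Longrightarrow> card {i\<in>D. n < i} = 0"
proof -
  assume h: "\<And>i. i \<in> D \<Longrightarrow> i \<le> n"
  have "{i\<in>D. n < i} = {}"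
  proof (rule equals0I)
    fix x assume "x \<in> {i\<in>D. n < i}" then show False using h[of x] by simp
  qed
  then show ?thesis by (simp only: card.empty)
qed

lemma gt_insert: "j < n \<Longrightarrow> {i \<in> insert n D. j < i} = insert n {i\<in>D. j < i}" by auto

lemma L34:
  fixes Q :: "'a::comm_ring_1"
  shows "D \<subseteq> {..<n} \<Longrightarrow> (\<Sum>j\<in>D. Q ^ card {i\<in>D. j < i}) = qint Q (card D) \<and>
    qint Q (card D) + (\<Sum>j\<in>{..<n} - D. Q ^ (j + card {i\<in>D. j < i})) = qint Q n"
proof (induction n arbitrary: D)
  case 0 then show ?case by simp
next
  case (Suc n)
  show ?case
  proof (cases "n \<in> D")
    case True
    define D' where "D' = D - {n}"
    have D': "D' \<subseteq> {..<n}" using Suc.prems by (auto simp: D'_def)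
    have fD': "finite D'" using D' finite_subset by blast
    have DD: "D = insert n D'" "n \<notin> D'" using True by (auto simp: D'_def)
    note IH = Suc.IH[OF D']
    have cD: "card D = Suc (card D')" using DD fD' by simp
    have g1: "(\<Sum>j\<in>D. Q ^ card {i\<in>D. j < i}) = 1 + Q * (\<Sum>j\<in>D'. Q ^ card {i\<in>D'. j < i})"
    proof -
      have "(\<Sum>j\<in>D. Q ^ card {i\<in>D. j < i}) = Q ^ card {i\<in>D. n < i} + (\<Sum>j\<in>D'. Q ^ card {i\<in>D. j < i})"
        using DD fD' by simp
      also have "card {i\<in>D. n < i} = 0"
      proof -
        have "{i\<in>D. n < i} = {}" using Suc.prems by auto
        then show ?thesis by (simp only: card.empty)
      qed
      also have "(\<Sum>j\<in>D'. Q ^ card {i\<in>D. j < i}) = (\<Sum>j\<in>D'. Q * Q ^ card {i\<in>D'. j < i})"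
      proof (rule sum.cong)
        fix j assume "j \<in> D'"
        then have "j < n" using D' by auto
        then have "{i\<in>D. j < i} = insert n {i\<in>D'. j < i}" unfolding DD(1) by (rule gt_insert)
        moreover have "finite {i\<in>D'. j < i}" using fD' by simp
        ultimately show "Q ^ card {i\<in>D. j < i} = Q * Q ^ card {i\<in>D'. j < i}" using DD(2) by simp
      qed simp
      finally show ?thesis by (simp add: sum_distrib_left)
    qed
    have g2: "(\<Sum>j\<in>{..<Suc n} - D. Q ^ (j + card {i\<in>D. j < i})) =
        Q * (\<Sum>j\<in>{..<n} - D'. Q ^ (j + card {i\<in>D'. j < i}))"
    proof -
      have e: "{..<Suc n} - D = {..<n} - D'" using DD by auto
      have "(\<Sum>j\<in>{..<n} - D'. Q ^ (j + card {i\<in>D. j < i})) = (\<Sum>j\<in>{..<n} - D'. Q * Q ^ (j + card {i\<in>D'. j < i}))"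
      proof (rule sum.cong)
        fix j assume "j \<in> {..<n} - D'"
        then have "j < n" by auto
        then have "{i\<in>D. j < i} = insert n {i\<in>D'. j < i}" unfolding DD(1) by (rule gt_insert)
        moreover have "finite {i\<in>D'. j < i}" using fD' by simp
        ultimately show "Q ^ (j + card {i\<in>D. j < i}) = Q * Q ^ (j + card {i\<in>D'. j < i})" using DD(2) by simp
      qed simp
      then show ?thesis unfolding e by (simp add: sum_distrib_left)
    qed
    have q1: "qint Q (Suc (card D')) = 1 + Q * qint Q (card D')"
      using qint_add[of Q 1 "card D'"] by simp
    have q2: "qint Q (Suc n) = 1 + Q * qint Q n"
      using qint_add[of Q 1 n] by simp
    show ?thesis unfolding g1 g2 cD q1 q2 using IH
      by (metis (no_types, lifting) distrib_left add.assoc)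
  next
    case False
    have D: "D \<subseteq> {..<n}" using Suc.prems False by (auto simp: less_Suc_eq)
    note IH = Suc.IH[OF D]
    have e: "{..<Suc n} - D = insert n ({..<n} - D)" using False by auto
    have c0: "card {i\<in>D. n < i} = 0" using D by (intro card_gt_empty) auto
    have "(\<Sum>j\<in>{..<Suc n} - D. Q ^ (j + card {i\<in>D. j < i})) =
        Q ^ n + (\<Sum>j\<in>{..<n} - D. Q ^ (j + card {i\<in>D. j < i}))"
      unfolding e using c0 by simp
    then show ?thesis using IH by (simp add: qint_Suc algebra_simps)
  qed
qed

lemma fps_const_sum: "fps_const (\<Sum>j\<in>A. f j) = (\<Sum>j\<in>A. fps_const (f j))"
  by (induction A rule: infinite_finite_induct) (simp_all del: fps_const_add add: fps_const_add[symmetric])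


lemma ge_in: "finite D \<Longrightarrow> j \<in> D \<Longrightarrow> card {i\<in>D. (j::nat) \<le> i} = Suc (card {i\<in>D. j < i})"
proof -
  assume f: "finite D" and j: "j \<in> D"
  have "{i\<in>D. j \<le> i} = insert j {i\<in>D. j < i}" using j by auto
  then show ?thesis using f by simp
qed

lemma ge_notin: "j \<notin> D \<Longrightarrow> {i\<in>D. j \<le> i} = {i\<in>D. (j::nat) < i}"
  by (auto simp: le_less)

lemma T0:
  fixes Q :: "'a::field"
  assumes D: "D \<subseteq> {..<n}"
  shows "(\<Sum>j\<le>n. fps_X ^ card (E0 D n j) * fps_const (Q ^ \<Sum>(E0 D n j))) =
    fps_X ^ card D * fps_const (Q ^ \<Sum>D) *
      (1 + fps_const (Q * qint Q (card D)) + fps_X * fps_const (Q * (qint Q n - qint Q (card D))))"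
proof -
  let ?F = "\<lambda>j. fps_X ^ card (E0 D n j) * fps_const (Q ^ \<Sum>(E0 D n j))"
  let ?C = "fps_X ^ card D * fps_const (Q ^ \<Sum>D) :: 'a fps"
  let ?gt = "\<lambda>j. card {i\<in>D. j < i}"
  have f: "finite D" using D finite_subset by blast
  have L: "(\<Sum>j\<in>D. Q ^ ?gt j) = qint Q (card D)"
    "qint Q (card D) + (\<Sum>j\<in>{..<n} - D. Q ^ (j + ?gt j)) = qint Q n"
    using L34[OF D, of Q] by auto
  have "(\<Sum>j\<le>n. ?F j) = ?F n + ((\<Sum>j\<in>{..<n} - D. ?F j) + (\<Sum>j\<in>D. ?F j))"
    using D by (simp add: lessThan_Suc_atMost[symmetric] sum.subset_diff[of D "{..<n}"])
  also have "?F n = ?C"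
  proof -
    have "{i\<in>D. n \<le> i} = {}" using D by auto
    then have "card {i\<in>D. n \<le> i} = 0" by (simp only: card.empty)
    then show ?thesis using E0_facts[OF D, of n] by simp
  qed
  also have "(\<Sum>j\<in>D. ?F j) = (\<Sum>j\<in>D. ?C * fps_const (Q * Q ^ ?gt j))"
  proof (rule sum.cong)
    fix j assume j: "j \<in> D"
    then have "j \<le> n" using D by auto
    then show "?F j = ?C * fps_const (Q * Q ^ ?gt j)"
      using E0_facts[OF D \<open>j \<le> n\<close>] j ge_in[OF f j] by (simp add: power_add mult_ac)
  qed simp
  also have "\<dots> = ?C * fps_const (Q * qint Q (card D))"
    by (simp add: sum_distrib_left[symmetric] fps_const_sum[symmetric] L(1)[symmetric] del: fps_const_mult)
  also have "(\<Sum>j\<in>{..<n} - D. ?F j) = (\<Sum>j\<in>{..<n} - D. ?C * (fps_X * fps_const (Q * Q ^ (j + ?gt j))))"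
  proof (rule sum.cong)
    fix j assume j: "j \<in> {..<n} - D"
    then have "j \<le> n" "j \<noteq> n" "j \<notin> D" by auto
    then show "?F j = ?C * (fps_X * fps_const (Q * Q ^ (j + ?gt j)))"
      using E0_facts[OF D \<open>j \<le> n\<close>] ge_notin[OF \<open>j \<notin> D\<close>] by (simp add: power_add mult_ac)
  qed simp
  also have "\<dots> = ?C * (fps_X * fps_const (Q * (qint Q n - qint Q (card D))))"
  proof -
    have "(\<Sum>j\<in>{..<n} - D. Q ^ (j + ?gt j)) = qint Q n - qint Q (card D)" using L(2) by (simp add: algebra_simps)
    then show ?thesis
      by (simp add: sum_distrib_left[symmetric] fps_const_sum[symmetric] del: fps_const_mult)
  qed
  finally show ?thesis by (simp add: algebra_simps)
qed

lemma T1: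
  fixes Q :: "'a::field"
  assumes D: "D \<subseteq> {..<n}"
  shows "(\<Sum>j\<le>n. fps_X ^ card (E1 D j) * fps_const (Q ^ \<Sum>(E1 D j))) =
    fps_X ^ card D * fps_const (Q ^ \<Sum>D) *
      (fps_const (qint Q (card D)) + fps_X * fps_const (qint Q (Suc n) - qint Q (card D)))"
proof -
  let ?F = "\<lambda>j. fps_X ^ card (E1 D j) * fps_const (Q ^ \<Sum>(E1 D j))"
  let ?C = "fps_X ^ card D * fps_const (Q ^ \<Sum>D) :: 'a fps"
  let ?gt = "\<lambda>j. card {i\<in>D. j < i}"
  have f: "finite D" using D finite_subset by blast
  have D': "D \<subseteq> {..<Suc n}" using D by auto
  have L: "(\<Sum>j\<in>D. Q ^ ?gt j) = qint Q (card D)"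
    "qint Q (card D) + (\<Sum>j\<in>{..<Suc n} - D. Q ^ (j + ?gt j)) = qint Q (Suc n)"
    using L34[OF D', of Q] by auto
  have "(\<Sum>j\<le>n. ?F j) = (\<Sum>j\<in>{..<Suc n}. ?F j)" by (simp only: lessThan_Suc_atMost)
  also have "\<dots> = (\<Sum>j\<in>{..<Suc n} - D. ?F j) + (\<Sum>j\<in>D. ?F j)"
    by (rule sum.subset_diff[OF D']) simp
  also have "(\<Sum>j\<in>D. ?F j) = (\<Sum>j\<in>D. ?C * fps_const (Q ^ ?gt j))"
  proof (rule sum.cong)
    fix j assume j: "j \<in> D"
    then show "?F j = ?C * fps_const (Q ^ ?gt j)"
      using E1_facts[OF D, of j] j by (simp add: power_add mult_ac)
  qed simp
  also have "\<dots> = ?C * fps_const (qint Q (card D))"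
    by (simp add: sum_distrib_left[symmetric] fps_const_sum[symmetric] L(1)[symmetric] del: fps_const_mult)
  also have "(\<Sum>j\<in>{..<Suc n} - D. ?F j) = (\<Sum>j\<in>{..<Suc n} - D. ?C * (fps_X * fps_const (Q ^ (j + ?gt j))))"
  proof (rule sum.cong)
    fix j assume j: "j \<in> {..<Suc n} - D"
    then have "j \<notin> D" by auto
    then show "?F j = ?C * (fps_X * fps_const (Q ^ (j + ?gt j)))"
      using E1_facts[OF D, of j] by (simp add: power_add mult_ac)
  qed simp
  also have "\<dots> = ?C * (fps_X * fps_const (qint Q (Suc n) - qint Q (card D)))"
  proof -
    have "(\<Sum>j\<in>{..<Suc n} - D. Q ^ (j + ?gt j)) = qint Q (Suc n) - qint Q (card D)" using L(2) by (simp add: algebra_simps)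
    then show ?thesis
      by (simp add: sum_distrib_left[symmetric] fps_const_sum[symmetric] del: fps_const_mult)
  qed
  finally show ?thesis by (simp add: algebra_simps)
qed


lemma CP_finite: "finite (colored_perms r n)"
proof -
  have "colored_perms r n \<subseteq> {xs. set xs \<subseteq> {1..n} \<times> {..<r} \<and> length xs = n}"
    by (auto simp: colored_perms_def) (metis atLeastAtMost_iff fst_conv imageI set_map, force)
  moreover have "finite {xs. set xs \<subseteq> {1..n} \<times> {..<r} \<and> length xs = n}"
    by (rule finite_lists_length_eq) simp
  ultimately show ?thesis by (rule finite_subset)
qed

lemma CP_image: "colored_perms r (Suc n) = (\<lambda>(w,z,j). ins n w z j) ` (colored_perms r n \<times> {..<r} \<times> {..n})"
proof
  show "colored_perms r (Suc n) \<subseteq> (\<lambda>(w,z,j). ins n w z j) ` (colored_perms r n \<times> {..<r} \<times> {..n})"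
  proof
    fix v assume "v \<in> colored_perms r (Suc n)"
    then obtain w z j where "w \<in> colored_perms r n" "z < r" "j \<le> n" "v = ins n w z j"
      using ins_surj by blast
    then show "v \<in> (\<lambda>(w,z,j). ins n w z j) ` (colored_perms r n \<times> {..<r} \<times> {..n})"
      by (intro image_eqI[of _ _ "(w,z,j)"]) auto
  qed
  show "(\<lambda>(w,z,j). ins n w z j) ` (colored_perms r n \<times> {..<r} \<times> {..n}) \<subseteq> colored_perms r (Suc n)"
    using ins_mem by auto
qed

lemma CP_inj: "inj_on (\<lambda>(w,z,j). ins n w z j) (colored_perms r n \<times> {..<r} \<times> {..n})"
  unfolding inj_on_def using ins_inj by fastforce

lemma sum_CP_Suc:
  "(\<Sum>v\<in>colored_perms r (Suc n). f v) = (\<Sum>w\<in>colored_perms r n. \<Sum>z<r. \<Sum>j\<le>n. f (ins n w z j))"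
proof -
  have "(\<Sum>v\<in>colored_perms r (Suc n). f v) = (\<Sum>p\<in>colored_perms r n \<times> {..<r} \<times> {..n}. f ((\<lambda>(w,z,j). ins n w z j) p))"
    unfolding CP_image by (subst sum.reindex[OF CP_inj]) (simp add: comp_def)
  also have "\<dots> = (\<Sum>w\<in>colored_perms r n. \<Sum>z<r. \<Sum>j\<le>n. f (ins n w z j))"
    by (simp only: sum.cartesian_product) (simp add: case_prod_beta)
  finally show ?thesis .
qed

lemma snd_sum_ins: "(\<Sum>x\<leftarrow>ins n w z j. snd x) = (\<Sum>x\<leftarrow>w. snd x) + z"
proof -
  have "(\<Sum>x\<leftarrow>w. snd x) = (\<Sum>x\<leftarrow>take j w @ drop j w. snd x)" by simp
  then show ?thesis unfolding ins_def by (simp only: map_append sum_list_append) simp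
qed

lemma qD_sum: "qD Q (\<Sum>w\<in>A. fps_X ^ d w * fps_const (f w)) = (\<Sum>w\<in>A. fps_X ^ d w * fps_const (qint Q (d w) * f w))"
  by (rule fps_ext) (auto simp: qD_def fps_sum_nth fps_X_power_mult_nth sum_distrib_left intro!: sum.cong)


lemma bracket:
  fixes Q q p a N Nn dd :: "'a::field"
  assumes h1: "Q = q * p" and h2: "(1 - q) * a = 1 - p" and h3: "Q * N + 1 = Nn"
  shows "(1 + fps_const (Q * dd) + fps_X * fps_const (Q * (N - dd))) +
         (fps_const dd + fps_X * fps_const (Nn - dd)) * fps_const (q * a) =
         fps_X * fps_const ((1 + q * a) * Nn) + (1 - fps_X) * (1 + fps_const (q * (1 + q * a) * dd))"
proof (rule fps_ext)
  fix m
  consider "m = 0" | "m = 1" | "m \<ge> (2::nat)" by linarith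
  then show "fps_nth ((1 + fps_const (Q * dd) + fps_X * fps_const (Q * (N - dd))) +
         (fps_const dd + fps_X * fps_const (Nn - dd)) * fps_const (q * a)) m =
        fps_nth (fps_X * fps_const ((1 + q * a) * Nn) + (1 - fps_X) * (1 + fps_const (q * (1 + q * a) * dd))) m"
  proof cases
    case 1
    have "1 + Q * dd + dd * (q * a) = 1 + q * (1 + q * a) * dd" using h1 h2 by algebra
    then show ?thesis using 1 by (simp add: algebra_simps)
  next
    case 2
    have "Q * (N - dd) + (Nn - dd) * (q * a) = (1 + q * a) * Nn - (1 + q * (1 + q * a) * dd)"
      using h1 h2 h3 by algebra
    then show ?thesis using 2 by (simp add: algebra_simps)
  next
    case 3
    then show ?thesis by (simp add: algebra_simps)
  qed
qed


lemma inner: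
  fixes q :: "'a::field"
  assumes w: "w \<in> colored_perms r n" and r: "r = Suc r'"
  shows "(\<Sum>z<r. \<Sum>j\<le>n. fps_X ^ col_des r (ins n w z j) * fps_const (q ^ col_fmaj r (ins n w z j))) =
    fps_X ^ col_des r w * fps_const (q ^ col_fmaj r w) *
      (fps_X * fps_const (qint q r * qint (q^r) (Suc n)) +
       (1 - fps_X) * (1 + fps_const (q * qint q r * qint (q^r) (col_des r w))))"
proof -
  define D where "D = col_Des r w"
  define Q where "Q = q ^ r"
  define cs where "cs = (\<Sum>x\<leftarrow>w. snd x)"
  define C where "C = fps_X ^ card D * fps_const (Q ^ \<Sum>D)"
  define K where "K = fps_const (q ^ cs)"
  have lw: "length w = n" using CP_D[OF w] by simp
  have D: "D \<subseteq> {..<n}" using Des_sub[of r w] lw by (simp add: D_def)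
  have tm: "fps_X ^ col_des r (ins n w z j) * fps_const (q ^ col_fmaj r (ins n w z j)) =
      fps_X ^ card (if z = 0 then E0 D n j else E1 D j) * fps_const (Q ^ \<Sum>(if z = 0 then E0 D n j else E1 D j))
      * fps_const (q ^ cs) * fps_const (q ^ z)" if "z < r" "j \<le> n" for z j
    using Des_ins[OF w that] unfolding col_des_def col_fmaj_def snd_sum_ins
    by (simp add: D_def Q_def cs_def power_add power_mult mult_ac)
  have "(\<Sum>z<r. \<Sum>j\<le>n. fps_X ^ col_des r (ins n w z j) * fps_const (q ^ col_fmaj r (ins n w z j)))
     = (\<Sum>z<r. \<Sum>j\<le>n. fps_X ^ card (if z = 0 then E0 D n j else E1 D j) * fps_const (Q ^ \<Sum>(if z = 0 then E0 D n j else E1 D j))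
      * fps_const (q ^ cs) * fps_const (q ^ z))"
    by (intro sum.cong refl) (simp add: tm)
  also have "\<dots> = (\<Sum>j\<le>n. fps_X ^ card (E0 D n j) * fps_const (Q ^ \<Sum>(E0 D n j))) * K
      + (\<Sum>z<r'. (\<Sum>j\<le>n. fps_X ^ card (E1 D j) * fps_const (Q ^ \<Sum>(E1 D j))) * K * fps_const (q ^ Suc z))"
    unfolding r by (subst sum.lessThan_Suc_shift) (simp add: sum_distrib_right K_def)
  also have "\<dots> = C * (1 + fps_const (Q * qint Q (card D)) + fps_X * fps_const (Q * (qint Q n - qint Q (card D)))) * K
      + C * (fps_const (qint Q (card D)) + fps_X * fps_const (qint Q (Suc n) - qint Q (card D))) * K * fps_const (q * qint q r')"
    unfolding T0[OF D] T1[OF D] C_def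
    by (simp add: sum_distrib_left[symmetric] fps_const_sum[symmetric] qint_def mult.assoc del: fps_const_mult)
  also have "\<dots> = C * K * ((1 + fps_const (Q * qint Q (card D)) + fps_X * fps_const (Q * (qint Q n - qint Q (card D)))) +
         (fps_const (qint Q (card D)) + fps_X * fps_const (qint Q (Suc n) - qint Q (card D))) * fps_const (q * qint q r'))"
    by (simp add: algebra_simps)
  also have "\<dots> = C * K * (fps_X * fps_const ((1 + q * qint q r') * qint Q (Suc n)) +
      (1 - fps_X) * (1 + fps_const (q * (1 + q * qint q r') * qint Q (card D))))"
  proof -
    have "Q = q * q ^ r'" by (simp add: Q_def r)
    moreover have "(1 - q) * qint q r' = 1 - q ^ r'" by (rule qint_one_minus)
    moreover have "Q * qint Q n + 1 = qint Q (Suc n)" using qint_add[of Q 1 n] by simp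
    ultimately show ?thesis by (simp only: bracket)
  qed
  also have "1 + q * qint q r' = qint q r" using qint_add[of q 1 r'] by (simp add: r)
  also have "C * K = fps_X ^ col_des r w * fps_const (q ^ col_fmaj r w)"
    by (simp add: C_def K_def col_des_def col_fmaj_def D_def Q_def cs_def power_add power_mult mult_ac)
  finally show ?thesis by (simp add: col_des_def D_def Q_def)
qed

lemma sum_lin: "(\<Sum>w\<in>A. a * F w + b * (F w + c * G w)) = a * sum F A + b * (sum F A + c * sum G A)"
  for a b c :: "'a::comm_ring_1"
  by (simp add: sum.distrib sum_distrib_left distrib_left)

lemma A_rec:
  fixes q :: "'a::field"
  assumes r: "r > 0"
  shows "colored_eulerian r (Suc n) q =
    fps_X * fps_const (qint q r * qint (q^r) (Suc n)) * colored_eulerian r n q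
    + (1 - fps_X) * (colored_eulerian r n q + fps_const (q * qint q r) * qD (q^r) (colored_eulerian r n q))"
proof -
  obtain r' where r': "r = Suc r'" using r by (cases r) auto
  let ?A = "colored_eulerian r n q"
  let ?c = "\<lambda>w. q ^ col_fmaj r w"
  have "colored_eulerian r (Suc n) q = (\<Sum>w\<in>colored_perms r n. fps_X ^ col_des r w * fps_const (?c w) *
      (fps_X * fps_const (qint q r * qint (q^r) (Suc n)) +
       (1 - fps_X) * (1 + fps_const (q * qint q r * qint (q^r) (col_des r w)))))"
    unfolding colored_eulerian_def sum_CP_Suc by (intro sum.cong refl inner[OF _ r'])
  also have "\<dots> = (\<Sum>w\<in>colored_perms r n. fps_X * fps_const (qint q r * qint (q^r) (Suc n)) * (fps_X ^ col_des r w * fps_const (?c w))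
      + (1 - fps_X) * (fps_X ^ col_des r w * fps_const (?c w) + fps_const (q * qint q r) * (fps_X ^ col_des r w * fps_const (qint (q^r) (col_des r w) * ?c w))))"
    by (intro sum.cong refl) (simp add: algebra_simps)
  also have "\<dots> = fps_X * fps_const (qint q r * qint (q^r) (Suc n)) * ?A
    + (1 - fps_X) * (?A + fps_const (q * qint q r) * (\<Sum>w\<in>colored_perms r n. fps_X ^ col_des r w * fps_const (qint (q^r) (col_des r w) * ?c w)))"
    unfolding colored_eulerian_def by (rule sum_lin)
  also have "(\<Sum>w\<in>colored_perms r n. fps_X ^ col_des r w * fps_const (qint (q^r) (col_des r w) * ?c w)) = qD (q^r) ?A"
    unfolding colored_eulerian_def by (rule qD_sum[symmetric])
  finally show ?thesis .
qed


lemma CP0: "colored_perms r 0 = {[]}"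
  by (auto simp: colored_perms_def)

lemma A0: "colored_eulerian r 0 q = 1"
  by (simp add: colored_eulerian_def CP0 col_des_def col_fmaj_def col_Des_def)

theorem proposition4p1:
  fixes r n :: nat and q :: "'a::field"
  assumes "r > 0" and "q \<noteq> 0"
  shows "colored_eulerian r n q / (\<Prod>i=0..n. 1 - fps_const (q ^ (r * i)) * fps_X) =
    (\<Sum>k=0..n. fps_const (q powi (int r * int (Suc k choose 2) + (1 - int r) * int k)
                   * qint q r ^ k * qfact (q ^ r) k * qStirling r q n k) * fps_X ^ k
              / (\<Prod>i=0..k. 1 - fps_const (q ^ (r * i)) * fps_X))"
proof -
  have A: "colored_eulerian r n q = PP (q^r) n * GG q r n"
    by (rule main_induct[where A = "\<lambda>n. colored_eulerian r n q"]) (simp_all add: A0 A_rec[OF assms(1)])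
  have p: "(\<Prod>i=0..n. 1 - fps_const (q ^ (r * i)) * fps_X) = PP (q^r) n"
    by (simp add: PP_def power_mult)
  have "colored_eulerian r n q / (\<Prod>i=0..n. 1 - fps_const (q ^ (r * i)) * fps_X) = GG q r n"
  proof -
    have "inverse (PP (q^r) n) * PP (q^r) n = 1" by (rule inverse_mult_eq_1) (simp add: PP_nth0)
    then show ?thesis
      unfolding p A by (simp add: fps_divide_unit PP_nth0 mult.commute[of "PP (q^r) n"] mult.assoc)
  qed
  then show ?thesis using RHS_eq[of q r n] by simp
qed

end
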